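(* Let $p$ be a prime with $p\equiv -1\pmod 4$. Then for all integers $\alpha\ge0$ and $n\ge0$, \[ \sum_{n=0}^{\infty}b_{16}\!\left(p^{2\alpha}n+\frac{5p^{2\alpha}-5}{8}\right)q^{n} \equiv \psi(q)\psi(q^4) \pmod 2, \] and \[ b_{16}\!\left(p^{2\alpha+2}n+\frac{(8i+5p)p^{2\alpha+1}-5}{8}\right)\equiv 0 \pmod 2,\qquad i=1,2,\ldots,p-1. \]
   Context: For a positive integer $\ell$, $b_\ell(n)$ denotes the number of partitions of $n$ having no part divisible by $\ell$. $\psi(q)=\sum_{n\ge0}q^{n(n+1)/2}$. A congruence between power series modulo $2$ means coefficientwise congruence. *)

theory Defs
  imports "HOL-Library.Multiset" "HOL-Computational_Algebra.Formal_Power_Series"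
begin

definition b_ell :: "nat \<Rightarrow> nat \<Rightarrow> nat" where
  "b_ell l n = card {P :: nat multiset. (\<forall>x\<in>#P. 0 < x \<and> \<not> l dvd x) \<and> sum_mset P = n}"

definition psi :: "int fps" where
  "psi = Abs_fps (\<lambda>n. if \<exists>k::nat. n = k * (k + 1) div 2 then 1 else 0)"

definition psi4 :: "int fps" where
  "psi4 = Abs_fps (\<lambda>n. if 4 dvd n \<and> (\<exists>k::nat. n div 4 = k * (k + 1) div 2) then 1 else 0)"

end

theory Submission
  imports Defs "HOL-Library.Z2" "HOL-Computational_Algebra.Polynomial" "HOL-Number_Theory.Cong"
begin


unbundle fps_syntax

type_synonym R = "bit fps"

lemma bit_add_self [simp]: "(x::bit) + x = 0"
  by (cases x) simp_all

lemma fps_bit_add_self [simp]: "(x::R) + x = 0"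
  by (rule fps_ext) (simp only: fps_add_nth bit_add_self fps_zero_nth)

lemma fps_bit_uminus: "- (x::R) = x"
  by (simp add: fps_eq_iff)

lemma fps_bit_minus: "(x::R) - y = x + y"
  using fps_bit_uminus[of y] by (metis diff_conv_add_uminus)

lemma of_nat_bit: "(of_nat n :: bit) = (if odd n then 1 else 0)"
  by (induction n) auto

lemma of_int_bit: "(of_int z :: bit) = (if odd z then 1 else 0)"
proof (cases "z \<ge> 0")
  case True
  then have "z = int (nat z)" by simp
  then show ?thesis using of_nat_bit[of "nat z"]
    by (metis of_int_of_nat_eq even_of_nat)
next
  case False
  then have "z = - int (nat (-z))" by simp
  then have "(of_int z :: bit) = of_nat (nat (-z))" by (metis of_int_minus of_int_of_nat_eq uminus_bit_def id_apply)
  moreover have "odd z \<longleftrightarrow> odd (nat (-z))" using False by (metis \<open>z = - int (nat (-z))\<close> even_minus even_of_nat)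
  ultimately show ?thesis using of_nat_bit by simp
qed

lemma fps_bit_sq: "((a::R) + b)^2 = a^2 + b^2"
proof -
  have "(a+b)^2 = a^2 + (a*b + a*b) + b^2" unfolding power2_eq_square by (simp only: distrib_left distrib_right add.assoc mult.commute[of b a])
  then show ?thesis by (simp only: fps_bit_add_self add_0_right)
qed

definition cg :: "nat \<Rightarrow> R \<Rightarrow> R \<Rightarrow> bool" where
  "cg N a b \<longleftrightarrow> fps_X ^ Suc N dvd (a - b)"

lemma cg_iff: "cg N a b \<longleftrightarrow> (\<forall>k\<le>N. a $ k = b $ k)"
proof
  assume "cg N a b"
  then obtain h where h: "a - b = fps_X ^ Suc N * h" by (auto simp: cg_def dvd_def)
  show "\<forall>k\<le>N. a $ k = b $ k"
  proof (intro allI impI)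
    fix k assume "k \<le> N"
    have "(a - b) $ k = 0" using h \<open>k\<le>N\<close> by (simp del: power_Suc add: fps_X_power_mult_nth)
    then show "a $ k = b $ k" by (metis eq_iff_diff_eq_0 fps_sub_nth)
  qed
next
  assume H: "\<forall>k\<le>N. a $ k = b $ k"
  define f where "f = a - b"
  have f0: "\<forall>k\<le>N. f $ k = 0" using H by (simp add: f_def)
  have "f = fps_X ^ Suc N * fps_shift (Suc N) f"
    by (rule fps_ext) (use f0 in \<open>auto simp del: power_Suc simp add: fps_X_power_mult_nth\<close>)
  then show "cg N a b" unfolding cg_def f_def by (metis dvd_triv_left)
qed

lemma cg_refl [simp]: "cg N a a" by (simp add: cg_def)
lemma cg_sym: "cg N a b \<Longrightarrow> cg N b a" by (simp add: cg_iff)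
lemma cg_trans: "cg N a b \<Longrightarrow> cg N b c \<Longrightarrow> cg N a c" by (simp add: cg_iff)
lemma cg_add: "cg N a b \<Longrightarrow> cg N c d \<Longrightarrow> cg N (a + c) (b + d)"
  by (simp add: cg_iff)
lemma cg_mult: "cg N a b \<Longrightarrow> cg N c d \<Longrightarrow> cg N (a * c) (b * d)"
proof -
  assume "cg N a b" "cg N c d"
  then have "fps_X ^ Suc N dvd (a - b) * c" "fps_X ^ Suc N dvd b * (c - d)"
    unfolding cg_def by auto
  then have "fps_X ^ Suc N dvd (a - b) * c + b * (c - d)" by (rule dvd_add)
  moreover have "(a - b) * c + b * (c - d) = a * c - b * d" by (simp add: algebra_simps)
  ultimately show ?thesis by (simp add: cg_def)
qed
lemma cg_power: "cg N a b \<Longrightarrow> cg N (a ^ k) (b ^ k)"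
  by (induction k) (auto intro: cg_mult)
lemma cg_cancel: "cg N (a * u) (b * u) \<Longrightarrow> u $ 0 \<noteq> 0 \<Longrightarrow> cg N a b"
proof -
  assume "cg N (a * u) (b * u)" "u $ 0 \<noteq> 0"
  then have "fps_X ^ Suc N dvd (a - b) * u" by (simp add: cg_def algebra_simps)
  then have "fps_X ^ Suc N dvd (a - b) * u * inverse u" by simp
  moreover have "u * inverse u = 1" using \<open>u $ 0 \<noteq> 0\<close> by (rule inverse_mult_eq_1')
  ultimately show ?thesis by (simp add: cg_def mult.assoc)
qed
lemma cg_sum: "(\<And>i. i \<in> A \<Longrightarrow> cg N (f i) (g i)) \<Longrightarrow> cg N (sum f A) (sum g A)"
  by (induction A rule: infinite_finite_induct) (auto intro: cg_add)
lemma cg_prod: "(\<And>i. i \<in> A \<Longrightarrow> cg N (f i) (g i)) \<Longrightarrow> cg N (prod f A) (prod g A)"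
  by (induction A rule: infinite_finite_induct) (auto intro: cg_mult)
lemma cg_Xpow: "N < k \<Longrightarrow> cg N (fps_X ^ k * a) 0"
  by (simp add: cg_iff fps_X_power_mult_nth)

definition D :: "nat \<Rightarrow> R" where
  "D n = (\<Prod>k<n. 1 + fps_X ^ Suc k)"

lemma D_0 [simp]: "D 0 = 1" by (simp add: D_def)
lemma D_Suc: "D (Suc n) = D n * (1 + fps_X ^ Suc n)" by (simp add: D_def)
lemma D_nth0 [simp]: "D n $ 0 = 1"
  by (induction n) (simp_all add: D_Suc)

lemma cg_prod_sub:
  assumes "finite B" "A \<subseteq> B" "\<And>k. k \<in> B - A \<Longrightarrow> cg N (f k) 1"
  shows "cg N (prod f B) (prod f A)"
proof -
  have "prod f B = prod f A * prod f (B - A)"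
    using assms by (metis prod.subset_diff mult.commute)
  moreover have "cg N (prod f (B - A)) (prod (\<lambda>_. 1) (B - A))"
    using assms(3) by (intro cg_prod) auto
  ultimately show ?thesis using cg_mult[OF cg_refl[of N "prod f A"]] by fastforce
qed

lemma cg_D: "N \<le> m \<Longrightarrow> cg N (D m) (D N)"
  unfolding D_def
  by (rule cg_prod_sub) (auto simp: cg_iff)


unbundle fps_syntax

definition T :: "nat \<Rightarrow> nat" where "T m = m * (m + 1) div 2"

lemma T2: "2 * T m = m * (m + 1)"
  unfolding T_def by simp

lemma T_Suc: "T (Suc m) = T m + Suc m"
proof -
  have "2 * T (Suc m) = 2 * (T m + Suc m)" unfolding T2 distrib_left by (simp add: T2 algebra_simps)
  then show ?thesis by simp
qed

lemma T_mono: "a < b \<Longrightarrow> T a < T b"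
proof (induction b)
  case 0 then show ?case by simp
next
  case (Suc b) then show ?case by (cases "a = b") (auto simp: T_Suc)
qed

lemma T_inj: "T a = T b \<longleftrightarrow> a = b"
  by (metis T_mono less_irrefl linorder_neqE_nat)

lemma T_ge: "j \<le> T j"
  by (induction j) (auto simp: T_Suc)

lemma bit_cancel: "(a::R) + b + (b + c) = a + c"
proof -
  have "a + b + (b + c) = a + (b + b) + c" by (simp only: add.assoc)
  then show ?thesis by simp
qed

fun g :: "nat \<Rightarrow> nat \<Rightarrow> R" where
  "g L 0 = 1"
| "g 0 (Suc m) = 0"
| "g (Suc L) (Suc m) = g L (Suc m) + fps_X ^ (L - m) * g L m"

lemma g_zero: "L < m \<Longrightarrow> g L m = 0"
proof (induction L arbitrary: m)
  case 0 then show ?case by (cases m) auto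
next
  case (Suc L) then show ?case by (cases m) auto
qed

lemma g_diag: "g L L = 1"
  by (induction L) (auto simp: g_zero)

lemma gA: "m \<le> L \<Longrightarrow> g L m * D m * D (L - m) = D L"
proof (induction L arbitrary: m)
  case 0 then show ?case by simp
next
  case (Suc L)
  show ?case
  proof (cases m)
    case 0 then show ?thesis by simp
  next
    case (Suc m')
    show ?thesis
    proof (cases "m' = L")
      case True then show ?thesis using Suc by (simp add: g_diag g_zero)
    next
      case False
      with Suc Suc.prems have lt: "m' < L" by simp
      have IH1: "g L (Suc m') * D (Suc m') * D (L - Suc m') = D L" using Suc.IH lt by simp
      have IH2: "g L m' * D m' * D (L - m') = D L" using Suc.IH lt by simp
      have e1: "L - m' = Suc (L - Suc m')" using lt by simp
      have e2: "fps_X ^ (L - m') * fps_X ^ Suc m' = (fps_X ^ Suc L :: R)"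
        using lt by (simp flip: power_add)
      have d1: "D (L - m') = D (L - Suc m') * (1 + fps_X ^ (L - m'))"
        using e1 D_Suc by metis
      have t1: "g L (Suc m') * D (Suc m') * D (L - m') = (g L (Suc m') * D (Suc m') * D (L - Suc m')) * (1 + fps_X ^ (L - m'))"
        by (simp only: d1 mult.assoc)
      have t2: "fps_X ^ (L - m') * g L m' * D (Suc m') * D (L - m') = fps_X ^ (L - m') * (g L m' * D m' * D (L - m')) * (1 + fps_X ^ Suc m')"
        by (simp only: D_Suc mult_ac)
      have "g (Suc L) m * D m * D (Suc L - m)
          = (g L (Suc m') + fps_X ^ (L - m') * g L m') * D (Suc m') * D (L - m')"
        using Suc by simp
      also have "\<dots> = g L (Suc m') * D (Suc m') * D (L - m') + fps_X ^ (L - m') * g L m' * D (Suc m') * D (L - m')"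
        by (simp only: distrib_right)
      also have "\<dots> = D L * (1 + fps_X ^ (L - m')) + fps_X ^ (L - m') * D L * (1 + fps_X ^ Suc m')"
        by (simp only: t1 t2 IH1 IH2)
      also have "\<dots> = D L * (1 + fps_X ^ (L - m') + (fps_X ^ (L - m') + fps_X ^ (L - m') * fps_X ^ Suc m'))"
        by (simp add: algebra_simps)
      also have "\<dots> = D L * (1 + fps_X ^ Suc L)"
        by (simp only: bit_cancel e2)
      also have "\<dots> = D (Suc L)" by (simp add: D_Suc)
      finally show ?thesis .
    qed
  qed
qed


unbundle fps_syntax

definition Pi :: "nat \<Rightarrow> R poly" where
  "Pi L = (\<Prod>k<L. [:1, fps_X ^ Suc k:])"

lemma mult_lin: "(p::'a::comm_ring_1 poly) * [:1, c:] = p + pCons 0 (smult c p)"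
  by (simp add: mult_pCons_right mult.commute smult_1_left)

lemma coeff_Pi: "coeff (Pi L) m = fps_X ^ T m * g L m"
proof (induction L arbitrary: m)
  case 0 then show ?case by (cases m) (auto simp: Pi_def T_def)
next
  case (Suc L)
  have P: "Pi (Suc L) = Pi L * [:1, fps_X ^ Suc L:]" by (simp add: Pi_def)
  show ?case
  proof (cases m)
    case 0 then show ?thesis using Suc.IH[of 0] by (simp add: P mult_lin T_def)
  next
    case (Suc m')
    have "coeff (Pi (Suc L)) m = coeff (Pi L) (Suc m') + fps_X ^ Suc L * coeff (Pi L) m'"
      by (simp add: P mult_lin Suc)
    also have "\<dots> = fps_X ^ T (Suc m') * g L (Suc m') + fps_X ^ Suc L * (fps_X ^ T m' * g L m')"
      by (simp add: Suc.IH)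
    also have "\<dots> = fps_X ^ T (Suc m') * g (Suc L) (Suc m')"
    proof (cases "m' \<le> L")
      case True
      have "Suc L + T m' = T (Suc m') + (L - m')" using True by (simp add: T_Suc)
      then have "fps_X ^ Suc L * (fps_X ^ T m' * g L m') = fps_X ^ T (Suc m') * (fps_X ^ (L - m') * g L m')"
        by (simp only: mult.assoc[symmetric] power_add[symmetric])
      then show ?thesis by (simp add: distrib_left)
    next
      case False then show ?thesis by (simp add: g_zero)
    qed
    finally show ?thesis using Suc by simp
  qed
qed

definition P2 :: "nat \<Rightarrow> R poly" where
  "P2 n = (\<Prod>j<n. [:fps_X ^ j, 1:])"

definition Q :: "nat \<Rightarrow> R poly" where
  "Q n = Pi n * P2 n"

definition S :: "nat \<Rightarrow> nat" where "S n = (\<Sum>j<n. j)"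

lemma prod_smult: "(\<Prod>j\<in>A. smult (c j) (p j)) = smult (\<Prod>j\<in>A. c j) (\<Prod>j\<in>A. p j)"
  by (induction A rule: infinite_finite_induct) (auto simp: mult_smult_left mult_smult_right mult_ac)

lemma prod_split: "(\<Prod>k<n + m. f k) = (\<Prod>k<n. f k) * (\<Prod>k<m. f (n + k))" for f :: "nat \<Rightarrow> 'a::comm_monoid_mult"
  by (induction m) (auto simp: mult.assoc)

lemma Q_compose: "pcompose (Q n) [:0, fps_X ^ n:] = smult (fps_X ^ S n) (Pi (2 * n))"
proof -
  have c1: "pcompose (Pi n) [:0, fps_X ^ n:] = (\<Prod>i<n. [:1, fps_X ^ Suc (n + i):] :: R poly)"
    unfolding Pi_def pcompose_prod by (intro prod.cong) (auto simp: pcompose_pCons power_add)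
  have c2: "pcompose (P2 n) [:0, fps_X ^ n:] = (\<Prod>j<n. smult (fps_X ^ j) [:1, fps_X ^ (n - j):])"
    unfolding P2_def pcompose_prod
  proof (intro prod.cong refl)
    fix j assume "j \<in> {..<n}"
    then have e: "fps_X ^ n = fps_X ^ j * (fps_X ^ (n - j) :: R)" by (simp flip: power_add)
    have "pcompose [:fps_X ^ j, 1:] [:0, fps_X ^ n:] = ([:fps_X ^ j, fps_X ^ n:] :: R poly)" by (simp add: pcompose_pCons)
    also have "\<dots> = smult (fps_X ^ j) [:1, fps_X ^ (n - j):]" using e by simp
    finally show "pcompose [:fps_X ^ j, 1:] [:0, fps_X ^ n:] = (smult (fps_X ^ j) [:1, fps_X ^ (n - j):] :: R poly)" .
  qed
  have c3: "(\<Prod>j<n. smult (fps_X ^ j) [:1, fps_X ^ (n - j):]) = smult (fps_X ^ S n) (\<Prod>j<n. [:1, fps_X ^ (n - j):] :: R poly)"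
    by (simp only: prod_smult S_def power_sum)
  have c4: "Pi (2 * n) = (\<Prod>j<n. [:1, fps_X ^ (n - j):] :: R poly) * (\<Prod>i<n. [:1, fps_X ^ Suc (n + i):])"
  proof -
    have "Pi (2 * n) = (\<Prod>k<n. [:1, fps_X ^ Suc k:]) * (\<Prod>i<n. [:1, fps_X ^ Suc (n + i):])"
      unfolding Pi_def using prod_split[of "\<lambda>k. [:1, fps_X ^ Suc k:]" n n] by (simp add: mult_2)
    moreover have "(\<Prod>k<n. [:1, fps_X ^ Suc k:]) = (\<Prod>j<n. [:1, fps_X ^ (n - j):] :: R poly)"
    proof -
      have "(\<Prod>k<n. [:1, fps_X ^ Suc k:]) = (\<Prod>j<n. [:1, fps_X ^ Suc (n - Suc j):] :: R poly)"
        by (rule prod.nat_diff_reindex[symmetric])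
      also have "\<dots> = (\<Prod>j<n. [:1, fps_X ^ (n - j):])"
        by (intro prod.cong refl) (simp add: Suc_diff_Suc)
      finally show ?thesis .
    qed
    ultimately show ?thesis by simp
  qed
  show ?thesis
    unfolding Q_def pcompose_mult c1 c2 c3 c4 by (simp add: mult_smult_right mult.commute)
qed

definition tau :: "nat \<Rightarrow> nat \<Rightarrow> nat" where
  "tau n m = (if n \<le> m then T (m - n) else T (n - m - 1))"

lemma S2: "2 * S n = n * (n - 1)"
  by (induction n) (auto simp: S_def algebra_simps)

lemma T2': "T m * 2 = m * (m + 1)"
  using T2[of m] by simp

lemma tau_eq: "n * m + tau n m = S n + T m"
proof (cases "n \<le> m")
  case True
  then obtain d where d: "m = n + d" by (metis le_add_diff_inverse)
  have "2 * (n * m + tau n m) = 2 * (S n + T m)"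
    unfolding distrib_left S2 using True
    by (simp add: tau_def d T2 T2' algebra_simps) (cases n; simp add: algebra_simps)
  then show ?thesis by simp
next
  case False
  then obtain d where d: "n = m + d + 1" by (metis add.commute add_Suc less_imp_Suc_add not_le plus_1_eq_Suc)
  have "2 * (n * m + tau n m) = 2 * (S n + T m)"
    unfolding distrib_left S2 using False
    by (simp add: tau_def d T2 T2' algebra_simps)
  then show ?thesis by simp
qed

lemma coeff_Q: "coeff (Q n) m = fps_X ^ tau n m * g (2 * n) m"
proof -
  have "coeff (pcompose (Q n) [:0, fps_X ^ n:]) m = fps_X ^ S n * (fps_X ^ T m * g (2 * n) m)"
    by (simp add: Q_compose coeff_Pi)
  then have "fps_X ^ (n * m) * coeff (Q n) m = fps_X ^ (n * m) * (fps_X ^ tau n m * g (2 * n) m)"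
    unfolding coeff_pcompose_linear
    by (simp add: power_mult[symmetric] mult.assoc[symmetric] power_add[symmetric] tau_eq)
  then show ?thesis by simp
qed


unbundle fps_syntax

lemma poly_sum_lt: "degree (p::'a::comm_semiring_1 poly) < K \<Longrightarrow> poly p x = (\<Sum>i<K. coeff p i * x ^ i)"
proof -
  assume "degree p < K"
  have "poly p x = (\<Sum>i\<le>degree p. coeff p i * x ^ i)" by (rule poly_altdef)
  also have "\<dots> = (\<Sum>i<K. coeff p i * x ^ i)"
    by (rule sum.mono_neutral_left) (use \<open>degree p < K\<close> in \<open>auto simp: coeff_eq_0\<close>)
  finally show ?thesis .
qed

lemma pderiv_lin: "pderiv [:1, 1:] = (1 :: R poly)"
  by (simp add: pderiv_pCons)

lemma coeff_pderiv_Q: "coeff (pderiv (Q n)) i = of_nat (Suc i) * (fps_X ^ tau n (Suc i) * g (2 * n) (Suc i))"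
  by (simp add: coeff_pderiv coeff_Q)

lemma degree_pderiv_Q: "1 \<le> n \<Longrightarrow> degree (pderiv (Q n)) < 2 * n"
proof -
  assume "1 \<le> n"
  have "degree (pderiv (Q n)) \<le> 2 * n - 1"
    by (rule degree_le) (auto simp: coeff_pderiv_Q g_zero)
  then show ?thesis using \<open>1 \<le> n\<close> by simp
qed

lemma star:
  assumes "1 \<le> n"
  shows "D n * D (n - 1) = (\<Sum>i<2 * n. of_nat (Suc i) * (fps_X ^ tau n (Suc i) * g (2 * n) (Suc i)))"
proof -
  obtain n' where n: "n = Suc n'" using assms by (cases n) auto
  define Q' where "Q' = Pi n * (\<Prod>j<n'. [:fps_X ^ Suc j, 1:] :: R poly)"
  have "P2 n = [:1, 1:] * (\<Prod>j<n'. [:fps_X ^ Suc j, 1:])"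
    unfolding P2_def n prod.lessThan_Suc_shift by simp
  then have QQ: "Q n = [:1, 1:] * Q'" by (simp add: Q_def Q'_def mult_ac)
  have "poly (pderiv (Q n)) 1 = poly Q' 1"
  proof -
    have "pderiv (Q n) = [:1, 1:] * pderiv Q' + Q'" by (simp only: QQ pderiv_mult pderiv_lin mult_1_right)
    then have "poly (pderiv (Q n)) 1 = (1 + 1) * poly (pderiv Q') 1 + poly Q' 1" by simp
    then show ?thesis by simp
  qed
  also have "poly Q' 1 = D n * D n'"
    by (simp add: Q'_def Pi_def poly_prod D_def add.commute)
  finally have L: "poly (pderiv (Q n)) 1 = D n * D (n - 1)" by (simp add: n)
  have "poly (pderiv (Q n)) 1 = (\<Sum>i<2 * n. coeff (pderiv (Q n)) i * 1 ^ i)"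
    by (rule poly_sum_lt[OF degree_pderiv_Q[OF assms]])
  then show ?thesis using L by (simp add: coeff_pderiv_Q)
qed

definition psib :: R where
  "psib = Abs_fps (\<lambda>n. if \<exists>k::nat. n = k * (k + 1) div 2 then 1 else 0)"

lemma tau_bound: "tau n m \<le> N \<Longrightarrow> n \<le> m + N + 1 \<and> m \<le> n + N"
proof (cases "n \<le> m")
  case True
  assume "tau n m \<le> N"
  then have "T (m - n) \<le> N" using True by (simp add: tau_def)
  then have "m - n \<le> N" using T_ge[of "m - n"] by linarith
  then show ?thesis using True by linarith
next
  case False
  assume "tau n m \<le> N"
  then have "T (n - m - 1) \<le> N" using False by (simp add: tau_def)
  then have "n - m - 1 \<le> N" using T_ge[of "n - m - 1"] by linarith
  then show ?thesis using False by linarith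
qed

lemma fps_of_nat_mult_nth: "((of_nat a :: R) * f) $ k = of_nat a * f $ k"
  by (simp add: fps_of_nat[symmetric] fps_mult_left_const_nth)


unbundle fps_syntax

lemma tau_T: "\<exists>d. tau n m = T d"
  unfolding tau_def by auto

lemma tau_eq_T_iff:
  assumes "j < n"
  shows "tau n m = T j \<longleftrightarrow> m = n + j \<or> m = n - j - 1"
  unfolding tau_def using assms by (auto simp: T_inj)

lemma sum_two: "a \<noteq> b \<Longrightarrow> sum f {a, b} = f a + (f b :: bit)"
  by simp

lemma K_lemma: "cg N (D N ^ 3) psib"
proof -
  define n where "n = 2 * N + 2"
  have n1: "1 \<le> n" by (simp add: n_def)
  define c where "c i = (of_nat (Suc i) :: R)" for i
  define t where "t i = tau n (Suc i)" for i
  define gg where "gg i = g (2 * n) (Suc i)" for i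
  have st: "D n * D (n - 1) = (\<Sum>i<2 * n. c i * (fps_X ^ t i * gg i))"
    using star[OF n1] by (simp add: c_def t_def gg_def)
  have cg1: "cg N (D N ^ 3) (D n * D (n - 1) * D N)"
  proof -
    have "cg N (D N * D N * D N) (D n * D (n - 1) * D N)"
      by (intro cg_mult cg_refl cg_sym[OF cg_D]) (auto simp: n_def)
    then show ?thesis by (simp add: power3_eq_cube)
  qed
  have cg2: "cg N (c i * (fps_X ^ t i * gg i) * D N) (c i * fps_X ^ t i)" if "i < 2 * n" for i
  proof (cases "N < t i")
    case True
    have "cg N (fps_X ^ t i * (c i * gg i * D N)) 0" by (rule cg_Xpow[OF True])
    moreover have "cg N (fps_X ^ t i * c i) 0" by (rule cg_Xpow[OF True])
    moreover have "c i * (fps_X ^ t i * gg i) * D N = fps_X ^ t i * (c i * gg i * D N)" by (simp add: mult_ac)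
    moreover have "c i * fps_X ^ t i = fps_X ^ t i * c i" by (simp add: mult_ac)
    ultimately show ?thesis using cg_trans cg_sym by metis
  next
    case False
    define m where "m = Suc i"
    have tb: "n \<le> m + N + 1 \<and> m \<le> n + N" using tau_bound[of n m N] False by (simp add: t_def m_def)
    have ml: "m \<le> 2 * n" using that by (simp add: m_def)
    have gA': "gg i * D m * D (2 * n - m) = D (2 * n)" using gA[OF ml] by (simp add: gg_def m_def)
    have "cg N (gg i * D m * D (2 * n - m)) (gg i * D N * D N)"
      by (intro cg_mult cg_refl cg_D) (use tb in \<open>auto simp: n_def\<close>)
    moreover have "cg N (D (2 * n)) (D N)" by (rule cg_D) (simp add: n_def)
    ultimately have "cg N (gg i * D N * D N) (D N)" using gA' cg_trans cg_sym by metis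
    then have "cg N ((gg i * D N) * D N) (1 * D N)" by simp
    then have "cg N (gg i * D N) 1" by (rule cg_cancel) simp
    then have "cg N (c i * fps_X ^ t i * (gg i * D N)) (c i * fps_X ^ t i * 1)"
      by (intro cg_mult cg_refl)
    then show ?thesis by (simp add: mult_ac)
  qed
  have cg3: "cg N (D N ^ 3) (\<Sum>i<2 * n. c i * fps_X ^ t i)"
  proof -
    have "cg N (\<Sum>i<2 * n. c i * (fps_X ^ t i * gg i) * D N) (\<Sum>i<2 * n. c i * fps_X ^ t i)"
      by (rule cg_sum) (rule cg2, simp)
    then have A: "cg N ((\<Sum>i<2 * n. c i * (fps_X ^ t i * gg i)) * D N) (\<Sum>i<2 * n. c i * fps_X ^ t i)"
      by (simp only: sum_distrib_right)
    have B: "cg N (D N ^ 3) ((\<Sum>i<2 * n. c i * (fps_X ^ t i * gg i)) * D N)"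
      using cg1 by (simp only: st)
    show ?thesis by (rule cg_trans[OF B A])
  qed
  have cg4: "cg N (\<Sum>i<2 * n. c i * fps_X ^ t i) psib"
    unfolding cg_iff
  proof (intro allI impI)
    fix k assume kN: "k \<le> N"
    have trm: "(c i * fps_X ^ t i) $ k = (if t i = k then of_nat (Suc i) else 0 :: bit)" for i
      unfolding c_def fps_of_nat_mult_nth fps_X_power_nth by auto
    have "(\<Sum>i<2 * n. c i * fps_X ^ t i) $ k = (\<Sum>i<2 * n. (if t i = k then of_nat (Suc i) else 0 :: bit))"
      unfolding fps_sum_nth trm ..
    also have "\<dots> = (\<Sum>i\<in>{i\<in>{..<2 * n}. t i = k}. of_nat (Suc i))"
      by (rule sum.inter_filter[symmetric]) simp
    also have "\<dots> = (\<Sum>i\<in>{i. i < 2 * n \<and> t i = k}. of_nat (Suc i))" by (rule sum.cong) auto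
    also have "\<dots> = psib $ k"
    proof (cases "\<exists>j. k = T j")
      case True
      then obtain j where j: "k = T j" by auto
      have jN: "j \<le> N" using T_ge[of j] j kN by simp
      have jn: "j < n" using jN by (simp add: n_def)
      have set: "{i. i < 2 * n \<and> t i = k} = {n + j - 1, n - j - 2}"
      proof -
        have "\<And>i. (i < 2 * n \<and> t i = k) \<longleftrightarrow> (i = n + j - 1 \<or> i = n - j - 2)"
          unfolding t_def j tau_eq_T_iff[OF jn] using jN by (auto simp: n_def)
        then show ?thesis by auto
      qed
      have dist: "n + j - 1 \<noteq> n - j - 2" using jN by (simp add: n_def)
      have "(\<Sum>i\<in>{i. i < 2 * n \<and> t i = k}. (of_nat (Suc i) :: bit)) = of_nat (Suc (n + j - 1)) + of_nat (Suc (n - j - 2))"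
        unfolding set using sum_two[OF dist, of "\<lambda>i. of_nat (Suc i)"] by simp
      also have "\<dots> = of_nat (Suc (n + j - 1) + Suc (n - j - 2))" by (simp only: of_nat_add)
      also have "Suc (n + j - 1) + Suc (n - j - 2) = 2 * (2 * N + 1) + 1" using jN by (simp add: n_def)
      also have "(of_nat (2 * (2 * N + 1) + 1) :: bit) = 1" by (simp add: of_nat_bit)
      also have "1 = psib $ k" using j by (auto simp: psib_def T_def)
      finally show ?thesis .
    next
      case False
      have "t i \<noteq> k" for i
      proof -
        obtain d where "tau n (Suc i) = T d" using tau_T by blast
        then show ?thesis using False by (auto simp: t_def)
      qed
      then have "{i. i < 2 * n \<and> t i = k} = {}" by auto
      moreover have "psib $ k = 0" using False by (auto simp: psib_def T_def)
      ultimately show ?thesis by (simp only: sum.empty)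
    qed
    finally show "(\<Sum>i<2 * n. c i * fps_X ^ t i) $ k = psib $ k" .
  qed
  show ?thesis using cg3 cg4 by (rule cg_trans)
qed


unbundle fps_syntax

definition geo :: "nat \<Rightarrow> R" where
  "geo k = Abs_fps (\<lambda>i. if k dvd i then 1 else 0)"

definition MS :: "nat set \<Rightarrow> nat \<Rightarrow> nat multiset set" where
  "MS K n = {P. set_mset P \<subseteq> K \<and> sum_mset P = n}"

lemma MS_empty: "MS {} n = (if n = 0 then {{#}} else {})"
  by (auto simp: MS_def)

lemma MS_insert:
  assumes "k \<notin> K" "0 < k"
  shows "MS (insert k K) n = (\<Union>j\<in>{..n div k}. (\<lambda>P. replicate_mset j k + P) ` MS K (n - j * k))"
proof (intro set_eqI iffI)
  fix P assume P: "P \<in> MS (insert k K) n"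
  define j where "j = count P k"
  define P' where "P' = {#y \<in># P. y \<noteq> k#}"
  have dec: "P = replicate_mset j k + P'"
    unfolding j_def P'_def using multiset_partition[of P "\<lambda>y. y = k"]
    by (simp add: filter_eq_replicate_mset)
  have setP': "set_mset P' \<subseteq> K" using P by (auto simp: MS_def P'_def)
  have "sum_mset P = j * k + sum_mset P'" by (subst dec) simp
  then have s: "j * k + sum_mset P' = n" using P by (simp add: MS_def)
  then have "j \<le> n div k" using assms(2) by (metis le_add1 less_eq_div_iff_mult_less_eq)
  moreover have "P' \<in> MS K (n - j * k)" using setP' s by (auto simp: MS_def)
  ultimately show "P \<in> (\<Union>j\<in>{..n div k}. (\<lambda>P. replicate_mset j k + P) ` MS K (n - j * k))"
    using dec by blast
next
  fix P assume "P \<in> (\<Union>j\<in>{..n div k}. (\<lambda>P. replicate_mset j k + P) ` MS K (n - j * k))"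
  then obtain j P' where j: "j \<le> n div k" and P': "P' \<in> MS K (n - j * k)" and P: "P = replicate_mset j k + P'"
    by auto
  have "j * k \<le> n" using j assms(2) by (metis div_times_less_eq_dividend le_trans mult_le_mono1)
  then show "P \<in> MS (insert k K) n" using P' P by (auto simp: MS_def)
qed

lemma count_MS: "P \<in> MS K m \<Longrightarrow> k \<notin> K \<Longrightarrow> count P k = 0"
  by (auto simp: MS_def count_eq_zero_iff)

lemma geo_prod:
  assumes "finite K" "0 \<notin> K"
  shows "finite (MS K n) \<and> (\<Prod>k\<in>K. geo k) $ n = of_nat (card (MS K n))"
  using assms
proof (induction K arbitrary: n rule: finite_induct)
  case empty
  then show ?case by (simp add: MS_empty)
next
  case (insert k K)
  have k0: "0 < k" using insert.prems by auto
  have IH: "\<And>m. finite (MS K m) \<and> (\<Prod>k\<in>K. geo k) $ m = of_nat (card (MS K m))"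
    using insert.IH insert.prems by auto
  define F where "F = (\<Prod>k\<in>K. geo k)"
  have fin: "finite (MS (insert k K) n)"
    unfolding MS_insert[OF insert.hyps(2) k0] using IH by auto
  have disj: "\<forall>i\<in>{..n div k}. \<forall>j\<in>{..n div k}. i \<noteq> j \<longrightarrow>
      ((\<lambda>P. replicate_mset i k + P) ` MS K (n - i * k)) \<inter> ((\<lambda>P. replicate_mset j k + P) ` MS K (n - j * k)) = {}"
  proof (intro ballI impI)
    fix i j :: nat assume "i \<noteq> j"
    show "((\<lambda>P. replicate_mset i k + P) ` MS K (n - i * k)) \<inter> ((\<lambda>P. replicate_mset j k + P) ` MS K (n - j * k)) = {}"
    proof (rule equals0I)
      fix Q assume "Q \<in> ((\<lambda>P. replicate_mset i k + P) ` MS K (n - i * k)) \<inter> ((\<lambda>P. replicate_mset j k + P) ` MS K (n - j * k))"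
      then obtain P1 P2 where "P1 \<in> MS K (n - i * k)" "P2 \<in> MS K (n - j * k)"
        "replicate_mset i k + P1 = replicate_mset j k + P2" by auto
      then have "count (replicate_mset i k + P1) k = count (replicate_mset j k + P2) k" by simp
      then show False using count_MS[OF \<open>P1 \<in> _\<close> insert.hyps(2)] count_MS[OF \<open>P2 \<in> _\<close> insert.hyps(2)] \<open>i \<noteq> j\<close>
        by simp
    qed
  qed
  have "card (MS (insert k K) n) = (\<Sum>j\<in>{..n div k}. card ((\<lambda>P. replicate_mset j k + P) ` MS K (n - j * k)))"
    unfolding MS_insert[OF insert.hyps(2) k0]
    by (rule card_UN_disjoint) (use IH disj in auto)
  also have "\<dots> = (\<Sum>j\<in>{..n div k}. card (MS K (n - j * k)))"
    by (intro sum.cong refl card_image) (simp add: inj_on_def)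
  finally have C: "card (MS (insert k K) n) = (\<Sum>j\<in>{..n div k}. card (MS K (n - j * k)))" .
  have "(geo k * F) $ n = (\<Sum>i\<in>{0..n}. (if k dvd i then F $ (n - i) else 0))"
    unfolding fps_mult_nth by (intro sum.cong refl) (simp add: geo_def)
  also have "\<dots> = (\<Sum>i\<in>{i\<in>{0..n}. k dvd i}. F $ (n - i))"
    by (rule sum.inter_filter[symmetric]) simp
  also have "{i\<in>{0..n}. k dvd i} = (\<lambda>j. j * k) ` {..n div k}"
  proof (intro set_eqI iffI)
    fix i assume "i \<in> {i\<in>{0..n}. k dvd i}"
    then have "k dvd i" "i \<le> n" by auto
    then obtain j where "i = j * k" by (metis dvdE mult.commute)
    then have "j \<le> n div k" using k0 \<open>i \<le> n\<close> by (metis less_eq_div_iff_mult_less_eq)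
    then show "i \<in> (\<lambda>j. j * k) ` {..n div k}" using \<open>i = j * k\<close> by auto
  next
    fix i assume "i \<in> (\<lambda>j. j * k) ` {..n div k}"
    then obtain j where "i = j * k" "j \<le> n div k" by auto
    then have "i \<le> n" using k0 by (metis less_eq_div_iff_mult_less_eq)
    then show "i \<in> {i\<in>{0..n}. k dvd i}" using \<open>i = j * k\<close> by auto
  qed
  also have "(\<Sum>i\<in>(\<lambda>j. j * k) ` {..n div k}. F $ (n - i)) = (\<Sum>j\<in>{..n div k}. F $ (n - j * k))"
    by (rule sum.reindex_cong[where l = "\<lambda>j. j * k"]) (use k0 in \<open>auto simp: inj_on_def\<close>)
  also have "\<dots> = (\<Sum>j\<in>{..n div k}. of_nat (card (MS K (n - j * k))))"
    using IH by (simp add: F_def)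
  also have "\<dots> = of_nat (card (MS (insert k K) n))" by (simp add: C)
  finally show ?case using fin insert.hyps by (simp add: F_def)
qed

lemma b_ell_MS: "b_ell l n = card (MS {k. 1 \<le> k \<and> k \<le> n \<and> \<not> l dvd k} n)"
proof -
  have le: "x \<le> sum_mset P" if "x \<in># P" for x :: nat and P
    using that by (metis le_add1 sum_mset.remove)
  have "{P :: nat multiset. (\<forall>x\<in>#P. 0 < x \<and> \<not> l dvd x) \<and> sum_mset P = n} = MS {k. 1 \<le> k \<and> k \<le> n \<and> \<not> l dvd k} n"
    unfolding MS_def using le by fastforce
  then show ?thesis by (simp add: b_ell_def)
qed

lemma geo_inv: "0 < k \<Longrightarrow> geo k * (1 + fps_X ^ k) = 1"
proof (rule fps_ext)
  fix i assume k: "0 < k"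
  have "(geo k * (1 + fps_X ^ k)) $ i = geo k $ i + (fps_X ^ k * geo k) $ i"
    by (simp add: distrib_left mult.commute)
  also have "\<dots> = (if k dvd i then 1 else 0) + (if i < k then 0 else (if k dvd (i - k) then 1 else 0))"
    by (simp add: geo_def fps_X_power_mult_nth)
  also have "\<dots> = (1 :: R) $ i"
  proof (cases "i < k")
    case True then show ?thesis using k by (auto dest: dvd_imp_le)
  next
    case False
    then have "k dvd (i - k) \<longleftrightarrow> k dvd i" by (simp add: dvd_diff_nat le_less_trans dvd_minus_self)
    then show ?thesis using False k by auto
  qed
  finally show "(geo k * (1 + fps_X ^ k)) $ i = (1::R) $ i" .
qed


unbundle fps_syntax

lemma frob2: "(1 + a :: R) ^ 2 = 1 + a ^ 2"
  using fps_bit_sq[of 1 a] by simp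

lemma frob4: "(1 + a :: R) ^ 4 = 1 + a ^ 4"
proof -
  have "(1 + a) ^ 4 = ((1 + a) ^ 2) ^ 2" by (simp flip: power_mult)
  also have "\<dots> = 1 + (a ^ 2) ^ 2" by (simp only: frob2)
  finally show ?thesis by (simp flip: power_mult)
qed

lemma frob16: "(1 + a :: R) ^ 16 = 1 + a ^ 16"
proof -
  have "(1 + a) ^ 16 = ((1 + a) ^ 4) ^ 4" by (simp flip: power_mult)
  also have "\<dots> = 1 + (a ^ 4) ^ 4" by (simp only: frob4)
  finally show ?thesis by (simp flip: power_mult)
qed

definition D4 :: "nat \<Rightarrow> R" where
  "D4 n = (\<Prod>k<n. 1 + fps_X ^ (4 * Suc k))"

lemma D_pow4: "D n ^ 4 = D4 n"
  unfolding D_def D4_def prod_power_distrib frob4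
  by (intro prod.cong refl) (simp only: power_mult[symmetric] mult.commute[of 4])

lemma D_pow16: "D n ^ 16 = (\<Prod>k<n. 1 + fps_X ^ (16 * Suc k))"
  unfolding D_def prod_power_distrib frob16
  by (intro prod.cong refl) (simp only: power_mult[symmetric] mult.commute[of 16])

lemma prod_Icc_Suc: "(\<Prod>k\<in>{1..n}. f k) = (\<Prod>k<n. f (Suc k))" for f :: "nat \<Rightarrow> 'a::comm_monoid_mult"
  by (induction n) (simp_all add: prod.cl_ivl_Suc mult.commute)

definition x4 :: R where "x4 = fps_X ^ 4"

lemma x4_0: "x4 $ 0 = 0" by (simp add: x4_def)

lemma D_compose: "D n oo x4 = D4 n"
  unfolding D_def D4_def fps_compose_prod_distrib[OF x4_0]
  apply (intro prod.cong refl)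
  apply (simp only: fps_compose_add_distrib fps_compose_1 fps_X_power_compose[OF x4_0])
  apply (simp only: x4_def power_mult[symmetric])
  done

definition psib4 :: R where
  "psib4 = Abs_fps (\<lambda>m. if 4 dvd m \<and> (\<exists>k::nat. m div 4 = k * (k + 1) div 2) then 1 else 0)"

lemma psib_compose: "psib oo x4 = psib4"
proof (rule fps_ext)
  fix m
  have "(psib oo x4) $ m = (\<Sum>i\<in>{0..m}. psib $ i * (if m = 4 * i then 1 else 0))"
    unfolding fps_compose_nth x4_def by (intro sum.cong refl) (simp flip: power_mult)
  also have "\<dots> = (\<Sum>i\<in>{0..m}. if i = m div 4 then (if 4 dvd m then psib $ i else 0) else 0)"
    by (intro sum.cong refl) auto
  also have "\<dots> = (if 4 dvd m then psib $ (m div 4) else 0)"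
    by (simp add: sum.delta)
  also have "\<dots> = psib4 $ m" by (simp add: psib_def psib4_def)
  finally show "(psib oo x4) $ m = psib4 $ m" .
qed

lemma K4: "cg N (D4 N ^ 3) psib4"
proof -
  obtain h where h: "D N ^ 3 - psib = fps_X ^ Suc N * h" using K_lemma[of N] by (auto simp: cg_def dvd_def)
  have "(D N ^ 3 - psib) oo x4 = D4 N ^ 3 - psib4"
    by (simp add: fps_compose_sub_distrib fps_compose_power[OF x4_0, symmetric] D_compose psib_compose)
  moreover have "(fps_X ^ Suc N * h) oo x4 = fps_X ^ (4 * Suc N) * (h oo x4)"
    apply (simp only: fps_compose_mult_distrib[OF x4_0] fps_X_power_compose[OF x4_0])
    apply (simp only: x4_def power_mult[symmetric])
    done
  moreover have "fps_X ^ Suc N dvd (fps_X ^ (4 * Suc N) :: R)" by (rule le_imp_power_dvd) simp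
  ultimately have "fps_X ^ Suc N dvd (D4 N ^ 3 - psib4)" using h by (metis dvd_mult2)
  then show ?thesis by (simp add: cg_def)
qed

lemma main_bit: "(of_nat (b_ell 16 n) :: bit) = (psib * psib4) $ n"
proof -
  define K where "K = {k. 1 \<le> k \<and> k \<le> n \<and> \<not> 16 dvd k}"
  define G where "G = (\<Prod>k\<in>K. geo k)"
  define E where "E = (\<Prod>j\<in>{1..n div 16}. 1 + fps_X ^ (16 * j) :: R)"
  have finK: "finite K" "0 \<notin> K" by (auto simp: K_def)
  have Gn: "G $ n = of_nat (b_ell 16 n)"
    using geo_prod[OF finK, of n] by (simp add: G_def b_ell_MS K_def)
  have GP: "G * (\<Prod>k\<in>K. 1 + fps_X ^ k) = 1"
    unfolding G_def prod.distrib[symmetric] by (intro prod.neutral ballI geo_inv) (auto simp: K_def)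
  have split: "{1..n} = K \<union> (\<lambda>j. 16 * j) ` {1..n div 16}"
  proof (intro set_eqI iffI)
    fix x assume x: "x \<in> {1..n}"
    show "x \<in> K \<union> (\<lambda>j. 16 * j) ` {1..n div 16}"
    proof (cases "16 dvd x")
      case True
      then obtain j where j: "x = 16 * j" by auto
      have "16 * j \<le> n" "1 \<le> 16 * j" using x j by auto
      then have "1 \<le> j" "j \<le> n div 16" by (linarith, simp add: less_eq_div_iff_mult_less_eq mult.commute)
      then show ?thesis using j by auto
    next
      case False then show ?thesis using x by (auto simp: K_def)
    qed
  next
    fix x assume "x \<in> K \<union> (\<lambda>j. 16 * j) ` {1..n div 16}"
    then show "x \<in> {1..n}"
    proof
      assume "x \<in> K" then show ?thesis by (auto simp: K_def)
    next
      assume "x \<in> (\<lambda>j. 16 * j) ` {1..n div 16}"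
      then obtain j where j: "x = 16 * j" "1 \<le> j" "j \<le> n div 16" by auto
      then have "16 * j \<le> n" by linarith
      then show ?thesis using j by auto
    qed
  qed
  have DKE: "D n = (\<Prod>k\<in>K. 1 + fps_X ^ k) * E"
  proof -
    have "D n = (\<Prod>k\<in>{1..n}. 1 + fps_X ^ k)" by (simp only: D_def prod_Icc_Suc)
    also have "\<dots> = (\<Prod>k\<in>K. 1 + fps_X ^ k) * (\<Prod>k\<in>(\<lambda>j. 16 * j) ` {1..n div 16}. 1 + fps_X ^ k)"
      unfolding split by (rule prod.union_disjoint) (auto simp: K_def)
    also have "(\<Prod>k\<in>(\<lambda>j. 16 * j) ` {1..n div 16}. 1 + fps_X ^ k) = E"
      unfolding E_def by (rule prod.reindex_cong[where l = "\<lambda>j. 16 * j"]) (auto simp: inj_on_def)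
    finally show ?thesis .
  qed
  have GD: "G * D n = E" by (simp add: DKE mult.assoc[symmetric] GP)
  have E16: "cg n E (D n ^ 16)"
  proof -
    have "E = (\<Prod>k<n div 16. 1 + fps_X ^ (16 * Suc k))" by (simp only: E_def prod_Icc_Suc)
    moreover have "cg n (\<Prod>k<n. 1 + fps_X ^ (16 * Suc k) :: R) (\<Prod>k<n div 16. 1 + fps_X ^ (16 * Suc k))"
    proof (rule cg_prod_sub)
      show "{..<n div 16} \<subseteq> {..<n}" by auto
    next
      fix k assume "k \<in> {..<n} - {..<n div 16}"
      then have "n < 16 * Suc k" by auto
      then show "cg n (1 + fps_X ^ (16 * Suc k)) 1" by (simp add: cg_iff)
    qed simp
    ultimately show ?thesis unfolding D_pow16 by (simp add: cg_sym)
  qed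
  have "D n ^ 16 = D n ^ 15 * D n" by (simp add: power_Suc2[symmetric])
  then have "cg n (G * D n) (D n ^ 15 * D n)" using GD E16 by simp
  then have G15: "cg n G (D n ^ 15)" by (rule cg_cancel) simp
  have "D n ^ 15 = D n ^ 3 * (D n ^ 4) ^ 3" by (simp add: power_mult[symmetric] power_add[symmetric])
  then have "D n ^ 15 = D n ^ 3 * D4 n ^ 3" by (simp only: D_pow4)
  moreover have "cg n (D n ^ 3 * D4 n ^ 3) (psib * psib4)" by (intro cg_mult K_lemma K4)
  ultimately have "cg n G (psib * psib4)" using cg_trans[OF G15] by simp
  then show ?thesis using Gn by (simp add: cg_iff)
qed


lemma fermat_nat:
  assumes "prime (p::nat)"
  shows "[a ^ p = a] (mod p)"
proof (induction a)
  case 0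
  have "p > 0" using assms prime_gt_0_nat by blast
  then show ?case by (metis cong_refl zero_power)
next
  case (Suc a)
  have p0: "p > 0" using assms prime_gt_0_nat by blast
  have "(a + 1) ^ p = (\<Sum>k\<le>p. (p choose k) * a ^ k * 1 ^ (p - k))"
    using binomial[of a 1 p] by simp
  also have "\<dots> = (\<Sum>k\<in>insert 0 (insert p {1..<p}). (p choose k) * a ^ k)"
    by (intro sum.cong) (use p0 in auto)
  also have "\<dots> = 1 + (a ^ p + (\<Sum>k\<in>{1..<p}. (p choose k) * a ^ k))"
    using p0 by (simp add: sum.insert)
  finally have e: "(a + 1) ^ p = 1 + (a ^ p + (\<Sum>k\<in>{1..<p}. (p choose k) * a ^ k))" .
  have "p dvd (\<Sum>k\<in>{1..<p}. (p choose k) * a ^ k)"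
    by (intro dvd_sum dvd_mult2 dvd_choose_prime) (use assms in auto)
  then have "[(\<Sum>k\<in>{1..<p}. (p choose k) * a ^ k) = 0] (mod p)" by (simp add: cong_0_iff)
  then have "[1 + (a ^ p + (\<Sum>k\<in>{1..<p}. (p choose k) * a ^ k)) = 1 + (a + 0)] (mod p)"
    by (intro cong_add cong_refl Suc.IH)
  then show ?case using e by simp
qed

lemma fermat_int:
  assumes "prime (p::nat)" "\<not> int p dvd a"
  shows "[a ^ (p - 1) = 1] (mod int p)"
proof -
  define b where "b = nat (a mod int p)"
  have p0: "p > 0" using assms prime_gt_0_nat by blast
  have ab: "[a = int b] (mod int p)" using p0 by (simp add: b_def cong_def)
  have "\<not> p dvd b"
    using assms(2) ab p0 by (metis cong_dvd_iff int_dvd_int_iff)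
  then have cop: "coprime b p" using assms(1) by (metis coprime_commute prime_imp_coprime)
  have "[b * b ^ (p - 1) = b * 1] (mod p)"
    using fermat_nat[OF assms(1), of b] p0 by (simp flip: power_Suc)
  then have "[b ^ (p - 1) = 1] (mod p)" by (simp only: cong_mult_lcancel_nat[OF cop])
  then have "[int b ^ (p - 1) = 1] (mod int p)" by (metis cong_int_iff of_nat_1 of_nat_power)
  moreover have "[a ^ (p - 1) = int b ^ (p - 1)] (mod int p)" by (rule cong_pow[OF ab])
  ultimately show ?thesis using cong_trans by blast
qed

lemma p34_dvd:
  fixes p :: nat and a b :: int
  assumes "prime p" "p mod 4 = 3" "int p dvd a ^ 2 + b ^ 2"
  shows "int p dvd a"
proof (rule ccontr)
  assume na: "\<not> int p dvd a"
  have pp: "prime (int p)" using assms(1) by simp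
  have nb: "\<not> int p dvd b"
  proof
    assume "int p dvd b"
    then have "int p dvd b ^ 2" by (simp add: power2_eq_square)
    then have "int p dvd a ^ 2" using assms(3) by (metis dvd_add_left_iff add.commute)
    then show False using na pp prime_dvd_power by blast
  qed
  define h where "h = (p - 1) div 2"
  have p1: "p - 1 = 2 * h" using assms(2) by (simp add: h_def) presburger
  have oh: "odd h" using assms(2) unfolding h_def by presburger
  have "[a ^ 2 = - (b ^ 2)] (mod int p)"
    using assms(3) by (simp add: cong_iff_dvd_diff)
  then have "[(a ^ 2) ^ h = (- (b ^ 2)) ^ h] (mod int p)" by (rule cong_pow)
  moreover have "(a ^ 2) ^ h = a ^ (p - 1)" unfolding p1 by (simp add: power_mult)
  moreover have "(- (b ^ 2)) ^ h = - (b ^ (p - 1))" using oh unfolding p1 by (simp add: power_mult)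
  ultimately have "[a ^ (p - 1) = - (b ^ (p - 1))] (mod int p)" by simp
  moreover have "[a ^ (p - 1) = 1] (mod int p)" by (rule fermat_int[OF assms(1) na])
  moreover have "[- (b ^ (p - 1)) = - 1] (mod int p)" by (rule cong_uminus[OF fermat_int[OF assms(1) nb]])
  ultimately have "[1 = - 1] (mod int p)" by (metis cong_sym cong_trans)
  then have "int p dvd 2" by (simp add: cong_iff_dvd_diff)
  then have "p dvd 2" by presburger
  then have "p \<le> 2" by (simp add: dvd_imp_le)
  then show False using assms(2) by presburger
qed


unbundle fps_syntax

definition Rset :: "nat \<Rightarrow> (nat \<times> nat) set" where
  "Rset N = {(x, y). odd x \<and> odd y \<and> x * x + 4 * (y * y) = N}"

definition Cset :: "nat \<Rightarrow> (nat \<times> nat) set" where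
  "Cset m = {(a, b). T a + 4 * T b = m}"

lemma odd_sq: "odd x \<Longrightarrow> x * x = 8 * T (x div 2) + 1"
proof -
  assume "odd x"
  then obtain k where k: "x = 2 * k + 1" by (metis oddE)
  have "x div 2 = k" using k by simp
  moreover have "2 * (2 * T k) = 2 * (k * (k + 1))" by (simp add: T2)
  ultimately show ?thesis using k by (simp add: algebra_simps)
qed

lemma card_RC: "card (Rset (8 * m + 5)) = card (Cset m)"
proof -
  define f where "f = (\<lambda>(x::nat, y::nat). (x div 2, y div 2))"
  have inj: "inj_on f (Rset (8 * m + 5))"
  proof (rule inj_onI)
    fix u v assume u: "u \<in> Rset (8 * m + 5)" and v: "v \<in> Rset (8 * m + 5)" and e: "f u = f v"
    obtain x y where [simp]: "u = (x, y)" by (cases u)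
    obtain x' y' where [simp]: "v = (x', y')" by (cases v)
    have "odd x" "odd y" "odd x'" "odd y'" using u v by (auto simp: Rset_def)
    moreover have "x div 2 = x' div 2" "y div 2 = y' div 2" using e by (auto simp: f_def)
    ultimately have "x = x'" "y = y'" by (metis odd_two_times_div_two_succ)+
    then show "u = v" by simp
  qed
  have img: "f ` Rset (8 * m + 5) = Cset m"
  proof (intro set_eqI iffI)
    fix w assume "w \<in> f ` Rset (8 * m + 5)"
    then obtain x y where xy: "odd x" "odd y" "x * x + 4 * (y * y) = 8 * m + 5" and w: "w = (x div 2, y div 2)"
      by (auto simp: Rset_def f_def)
    have "8 * T (x div 2) + 1 + 4 * (8 * T (y div 2) + 1) = 8 * m + 5"
      using xy odd_sq[of x] odd_sq[of y] by simp
    then have "T (x div 2) + 4 * T (y div 2) = m" by simp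
    then show "w \<in> Cset m" using w by (simp add: Cset_def)
  next
    fix w assume "w \<in> Cset m"
    then obtain a b where ab: "T a + 4 * T b = m" and w: "w = (a, b)" by (auto simp: Cset_def)
    have o: "odd (2 * a + 1)" "odd (2 * b + 1)" by simp_all
    have "(2 * a + 1) * (2 * a + 1) + 4 * ((2 * b + 1) * (2 * b + 1)) = 8 * m + 5"
      using odd_sq[OF o(1)] odd_sq[OF o(2)] ab by simp
    then have "(2 * a + 1, 2 * b + 1) \<in> Rset (8 * m + 5)" by (simp add: Rset_def)
    moreover have "f (2 * a + 1, 2 * b + 1) = w" by (simp add: f_def w)
    ultimately show "w \<in> f ` Rset (8 * m + 5)" by (metis image_eqI)
  qed
  show ?thesis using card_image[OF inj] img by simp
qed

lemma psi_nth: "psi $ i = (if \<exists>k. i = T k then 1 else 0)"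
  by (simp add: psi_def T_def)

lemma psi4_nth: "psi4 $ i = (if 4 dvd i \<and> (\<exists>k. i div 4 = T k) then 1 else 0)"
  by (simp add: psi4_def T_def)

lemma coeff_count: "(psi * psi4) $ m = int (card (Cset m))"
proof -
  define P where "P i \<longleftrightarrow> (\<exists>k. i = T k) \<and> 4 dvd (m - i) \<and> (\<exists>k. (m - i) div 4 = T k)" for i
  have "(psi * psi4) $ m = (\<Sum>i\<in>{0..m}. (if P i then 1 else 0 :: int))"
    unfolding fps_mult_nth by (intro sum.cong refl) (simp add: psi_nth psi4_nth P_def)
  also have "\<dots> = (\<Sum>i\<in>{i\<in>{0..m}. P i}. 1)" by (rule sum.inter_filter[symmetric]) simp
  also have "\<dots> = int (card {i\<in>{0..m}. P i})" by simp
  also have "card {i\<in>{0..m}. P i} = card (Cset m)"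
  proof -
    define f where "f = (\<lambda>(a::nat, b::nat). T a)"
    have inj: "inj_on f (Cset m)"
    proof (rule inj_onI)
      fix u v assume u: "u \<in> Cset m" and v: "v \<in> Cset m" and e: "f u = f v"
      obtain a b where [simp]: "u = (a, b)" by (cases u)
      obtain a' b' where [simp]: "v = (a', b')" by (cases v)
      have "T a = T a'" using e by (simp add: f_def)
      then have "a = a'" by (simp add: T_inj)
      moreover have "T a + 4 * T b = m" "T a' + 4 * T b' = m" using u v by (auto simp: Cset_def)
      ultimately have "T b = T b'" by simp
      then show "u = v" using \<open>a = a'\<close> by (simp add: T_inj)
    qed
    have "f ` Cset m = {i\<in>{0..m}. P i}"
    proof (intro set_eqI iffI)
      fix i assume "i \<in> f ` Cset m"
      then obtain a b where ab: "T a + 4 * T b = m" and i: "i = T a" by (auto simp: Cset_def f_def)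
      have "m - i = 4 * T b" using ab i by simp
      then show "i \<in> {i\<in>{0..m}. P i}" using ab i unfolding P_def by auto
    next
      fix i assume "i \<in> {i\<in>{0..m}. P i}"
      then obtain a b where i: "i = T a" and im: "i \<le> m" and d: "4 dvd (m - i)" and b: "(m - i) div 4 = T b"
        unfolding P_def by auto
      have "m - i = 4 * T b" using d b by auto
      then have "T a + 4 * T b = m" using i im by simp
      then show "i \<in> f ` Cset m" using i by (force simp: Cset_def f_def)
    qed
    then show ?thesis using card_image[OF inj] by simp
  qed
  finally show ?thesis .
qed

lemma psib_nth: "psib $ i = of_int (psi $ i)"
  by (simp add: psib_def psi_def)

lemma psib4_nth: "psib4 $ i = of_int (psi4 $ i)"
  by (simp add: psib4_def psi4_def)

lemma main_mod: "int (b_ell 16 m) mod 2 = (psi * psi4) $ m mod 2"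
proof -
  have "(psib * psib4) $ m = of_int ((psi * psi4) $ m)"
    by (simp add: fps_mult_nth psib_nth psib4_nth)
  then have "(of_nat (b_ell 16 m) :: bit) = of_int ((psi * psi4) $ m)" using main_bit by simp
  then have "odd (b_ell 16 m) \<longleftrightarrow> odd ((psi * psi4) $ m)"
    by (simp add: of_nat_bit of_int_bit split: if_splits)
  then show ?thesis by (metis even_of_nat odd_iff_mod_2_eq_one even_iff_mod_2_eq_zero)
qed


unbundle fps_syntax

lemma p_not_dvd_2: "(p::nat) mod 4 = 3 \<Longrightarrow> \<not> p dvd 2"
proof
  assume "p mod 4 = 3" "p dvd 2"
  then have "p \<le> 2" by (simp add: dvd_imp_le)
  then show False using \<open>p mod 4 = 3\<close> by presburger
qed

lemma p_dvd_both:
  fixes p X Y :: nat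
  assumes "prime p" "p mod 4 = 3" "p dvd X * X + 4 * (Y * Y)"
  shows "p dvd X \<and> p dvd Y"
proof -
  have eq: "int (X * X + 4 * (Y * Y)) = (int X) ^ 2 + (2 * int Y) ^ 2" by (simp add: power2_eq_square)
  have d: "int p dvd (int X) ^ 2 + (2 * int Y) ^ 2"
    unfolding eq[symmetric] using assms(3) by (simp only: int_dvd_int_iff)
  have "int p dvd int X" by (rule p34_dvd[OF assms(1,2) d])
  then have pX: "p dvd X" by simp
  have "int p dvd 2 * int Y"
    by (rule p34_dvd[OF assms(1,2)]) (use d in \<open>simp add: add.commute\<close>)
  then have "p dvd 2 * Y" by (metis int_dvd_int_iff of_nat_mult of_nat_numeral)
  then have "p dvd Y" using assms(1) p_not_dvd_2[OF assms(2)] prime_dvd_mult_nat by blast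
  then show ?thesis using pX by simp
qed

lemma Rset_scale:
  assumes "prime p" "p mod 4 = 3"
  shows "card (Rset (p * p * N)) = card (Rset N)"
proof -
  have p0: "p > 0" using assms(1) prime_gt_0_nat by blast
  have op: "odd p" using assms(2) by presburger
  define f where "f = (\<lambda>(x::nat, y::nat). (p * x, p * y))"
  have inj: "inj_on f (Rset N)" using p0 by (auto simp: inj_on_def f_def)
  have "f ` Rset N = Rset (p * p * N)"
  proof (intro set_eqI iffI)
    fix w assume "w \<in> f ` Rset N"
    then obtain x y where xy: "odd x" "odd y" "x * x + 4 * (y * y) = N" and w: "w = (p * x, p * y)"
      by (auto simp: Rset_def f_def)
    have "(p * x) * (p * x) + 4 * ((p * y) * (p * y)) = p * p * (x * x + 4 * (y * y))" by (simp add: algebra_simps)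
    then show "w \<in> Rset (p * p * N)" using xy w op by (simp add: Rset_def)
  next
    fix w assume "w \<in> Rset (p * p * N)"
    then obtain X Y where XY: "odd X" "odd Y" "X * X + 4 * (Y * Y) = p * p * N" and w: "w = (X, Y)"
      by (auto simp: Rset_def)
    have "p dvd X * X + 4 * (Y * Y)" using XY(3) by simp
    then have "p dvd X" "p dvd Y" using p_dvd_both[OF assms] by blast+
    then obtain x y where x: "X = p * x" and y: "Y = p * y" by (metis dvdE)
    have "p * p * (x * x + 4 * (y * y)) = p * p * N" using XY(3) x y by (simp add: algebra_simps)
    then have "x * x + 4 * (y * y) = N" using p0 by simp
    moreover have "odd x" "odd y" using XY(1,2) x y by auto
    ultimately have "(x, y) \<in> Rset N" by (simp add: Rset_def)
    then show "w \<in> f ` Rset N" using w x y by (force simp: f_def)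
  qed
  then show ?thesis using card_image[OF inj] by simp
qed

lemma Rset_pow:
  assumes "prime p" "p mod 4 = 3"
  shows "card (Rset (p ^ (2 * a) * N)) = card (Rset N)"
proof (induction a)
  case 0 then show ?case by simp
next
  case (Suc a)
  have "p ^ (2 * Suc a) * N = p * p * (p ^ (2 * a) * N)" by (simp add: algebra_simps)
  then have "card (Rset (p ^ (2 * Suc a) * N)) = card (Rset (p ^ (2 * a) * N))"
    using Rset_scale[OF assms] by (simp only:)
  then show ?case using Suc by simp
qed

lemma Rset_zero:
  assumes "prime p" "p mod 4 = 3" "\<not> p dvd M"
  shows "Rset (p * M) = {}"
proof (rule equals0I)
  fix w assume "w \<in> Rset (p * M)"
  then obtain X Y where XY: "X * X + 4 * (Y * Y) = p * M" by (auto simp: Rset_def)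
  have "p dvd X * X + 4 * (Y * Y)" using XY by simp
  then have "p dvd X" "p dvd Y" using p_dvd_both[OF assms(1,2)] by blast+
  then obtain x y where x: "X = p * x" and y: "Y = p * y" by (metis dvdE)
  have p0: "p > 0" using assms(1) prime_gt_0_nat by blast
  have "p * (p * (x * x + 4 * (y * y))) = p * M" using XY x y by (simp add: algebra_simps)
  then have "p * (x * x + 4 * (y * y)) = M" using p0 by simp
  then show False using assms(3) by (metis dvd_triv_left)
qed

lemma count_eq: "(psi * psi4) $ m = int (card (Rset (8 * m + 5)))"
  by (simp add: coeff_count card_RC)

lemma odd_pow_form: "odd (p::nat) \<Longrightarrow> \<exists>t. p ^ (2 * a) = 8 * t + 1"
proof -
  assume "odd p"
  then have "odd (p ^ a)" by simp
  then have "p ^ a * p ^ a = 8 * T (p ^ a div 2) + 1" by (rule odd_sq)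
  then show ?thesis by (metis power_add mult_2)
qed

theorem theorem3p24:
  fixes p :: nat
  assumes "prime p" and "p mod 4 = 3"
  shows "(\<forall>\<alpha> n. int (b_ell 16 (p ^ (2 * \<alpha>) * n + (5 * p ^ (2 * \<alpha>) - 5) div 8)) mod 2
                 = fps_nth (psi * psi4) n mod 2) \<and>
         (\<forall>\<alpha> n i. 1 \<le> i \<and> i \<le> p - 1 \<longrightarrow>
           even (b_ell 16 (p ^ (2 * \<alpha> + 2) * n + ((8 * i + 5 * p) * p ^ (2 * \<alpha> + 1) - 5) div 8)))"
proof (intro conjI allI impI)
  have op: "odd p" using assms(2) by presburger
  fix \<alpha> n
  define q where "q = p ^ (2 * \<alpha>)"
  obtain t where t: "q = 8 * t + 1" using odd_pow_form[OF op] q_def by blast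
  define m where "m = p ^ (2 * \<alpha>) * n + (5 * p ^ (2 * \<alpha>) - 5) div 8"
  have "5 * q - 5 = 8 * (5 * t)" using t by simp
  then have m: "m = q * n + 5 * t" by (simp add: m_def q_def[symmetric])
  have "8 * m + 5 = q * (8 * n + 5)" using m t by (simp add: algebra_simps)
  then have "(psi * psi4) $ m = (psi * psi4) $ n"
    using count_eq[of m] count_eq[of n] Rset_pow[OF assms, of \<alpha> "8 * n + 5"] by (simp add: q_def)
  then show "int (b_ell 16 (p ^ (2 * \<alpha>) * n + (5 * p ^ (2 * \<alpha>) - 5) div 8)) mod 2 = (psi * psi4) $ n mod 2"
    using main_mod[of m] by (simp add: m_def)
next
  have op: "odd p" using assms(2) by presburger
  fix \<alpha> n i assume i: "1 \<le> i \<and> i \<le> p - 1"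
  define q where "q = p ^ (2 * \<alpha>)"
  obtain t where t: "q = 8 * t + 1" using odd_pow_form[OF op] q_def by blast
  obtain s where s: "p * p = 8 * s + 1" using odd_pow_form[OF op, of 1] by (auto simp: power2_eq_square)
  define m where "m = p ^ (2 * \<alpha> + 2) * n + ((8 * i + 5 * p) * p ^ (2 * \<alpha> + 1) - 5) div 8"
  have pq1: "p ^ (2 * \<alpha> + 1) = p * q" by (simp add: q_def)
  have pq2: "p ^ (2 * \<alpha> + 2) = p * p * q" by (simp add: q_def)
  have "(8 * i + 5 * p) * (p * q) = 8 * (i * p * q) + 5 * ((p * p) * q)" by (simp add: algebra_simps)
  also have "\<dots> = 8 * (i * p * q) + 5 * ((8 * s + 1) * (8 * t + 1))" using s t by simp
  also have "\<dots> = 8 * (i * p * q + 5 * (8 * s * t + s + t)) + 5" by (simp add: algebra_simps)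
  finally have e: "(8 * i + 5 * p) * (p * q) = 8 * (i * p * q + 5 * (8 * s * t + s + t)) + 5" .
  have m: "m = p * p * q * n + (i * p * q + 5 * (8 * s * t + s + t))"
    unfolding m_def pq1 pq2 e by simp
  define M where "M = 8 * p * n + 8 * i + 5 * p"
  have "8 * m + 5 = 8 * (p * p * q * n) + (8 * (i * p * q + 5 * (8 * s * t + s + t)) + 5)"
    using m by simp
  also have "\<dots> = 8 * (p * p * q * n) + (8 * i + 5 * p) * (p * q)" using e by simp
  also have "\<dots> = q * (p * M)" by (simp add: M_def algebra_simps)
  finally have mm: "8 * m + 5 = p ^ (2 * \<alpha>) * (p * M)" by (simp add: q_def)
  have nd: "\<not> p dvd M"
  proof
    assume "p dvd M"
    moreover have "M = p * (8 * n + 5) + 8 * i" by (simp add: M_def algebra_simps)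
    ultimately have "p dvd 8 * i" by (metis dvd_add_right_iff dvd_triv_left)
    moreover have "\<not> p dvd 8"
    proof
      assume "p dvd 8"
      then have "p dvd 2 ^ 3" by simp
      then have "p dvd 2" using assms(1) prime_dvd_power by blast
      then show False using p_not_dvd_2[OF assms(2)] by simp
    qed
    moreover have "\<not> p dvd i"
    proof
      assume "p dvd i"
      then have "p \<le> i" using i by (simp add: dvd_imp_le)
      then show False using i assms(1) prime_gt_0_nat by fastforce
    qed
    ultimately show False using assms(1) prime_dvd_mult_nat by blast
  qed
  have "(psi * psi4) $ m = 0"
    using count_eq[of m] Rset_pow[OF assms, of \<alpha> "p * M"] Rset_zero[OF assms nd] mm by simp
  then have "int (b_ell 16 m) mod 2 = 0" using main_mod[of m] by simp
  then show "even (b_ell 16 (p ^ (2 * \<alpha> + 2) * n + ((8 * i + 5 * p) * p ^ (2 * \<alpha> + 1) - 5) div 8))"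
    unfolding m_def[symmetric] by presburger
qed


end
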